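(* For all retractable contracts $\rho,\sigma$: if $\rho$ is compliant with $\sigma$, then the judgment $\vartriangleright\rho\dashv\sigma$ (with empty assumption set) is derivable in the formal system for compliance.
   Context: Let $\mathcal N$ be a countable set of names and $\overline{\mathcal N}=\{\bar a\mid a\in\mathcal N\}$ a disjoint set of conames; $\alpha$ ranges over $\mathcal N\cup\overline{\mathcal N}$, with $\bar{\bar a}=a$. Retractable contracts are the closed expressions generated by $\sigma ::= \mathbf 1 \mid \sum_{i\in I} a_i.\sigma_i \ (\text{input}) \mid \sum_{i\in I}\bar a_i.\sigma_i\ (\text{retractable output}) \mid \bigoplus_{i\in I}\bar a_i.\sigma_i\ (\text{unretractable output}) \mid x \mid \mathsf{rec}\,x.\sigma$, where $I$ is non-empty and finite, names/conames in each choice are pairwise distinct, and $\sigma$ is not a variable in $\mathsf{rec}\,x.\sigma$. Choices are commutative; $\mathsf{rec}\,x.\sigma$ is identified with $\sigma[\mathsf{rec}\,x.\sigma/x]$. A unary $\bar a.\sigma$ may be read as either kind of output. Histories are stacks $\vec\gamma ::= [\,] \mid \vec\gamma:\sigma$ with $\sigma$ a retractable contract or the special symbol $\circ$. A contract with history is a pair $\langle\vec\gamma,\sigma\rangle$ with $\sigma$ a contract or $\circ$. Transitions: $\langle\vec\gamma,\alpha.\sigma+\sigma'\rangle\xrightarrow{\alpha}\langle\vec\gamma:\sigma',\sigma\rangle$ (for retractable choices, $+$ being input or retractable output sum); $\langle\vec\gamma,\bar a.\sigma\oplus\sigma'\rangle\xrightarrow{\tau}\langle\vec\gamma,\bar a.\sigma\rangle$;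 $\langle\vec\gamma,\alpha.\sigma\rangle\xrightarrow{\alpha}\langle\vec\gamma:\circ,\sigma\rangle$; $\langle\vec\gamma:\sigma',\sigma\rangle\xrightarrow{\mathsf{rb}}\langle\vec\gamma,\sigma'\rangle$. Client/server pairs $\langle\vec\delta,\rho\rangle\parallel\langle\vec\gamma,\sigma\rangle$ reduce by: (comm) if $\langle\vec\delta,\rho\rangle\xrightarrow{\alpha}\langle\vec\delta',\rho'\rangle$ and $\langle\vec\gamma,\sigma\rangle\xrightarrow{\bar\alpha}\langle\vec\gamma',\sigma'\rangle$ then the pair reduces to $\langle\vec\delta',\rho'\rangle\parallel\langle\vec\gamma',\sigma'\rangle$; ($\tau$) a $\tau$-transition of either component alone; (rbk) if both components do an $\mathsf{rb}$ transition and $\rho\neq\mathbf 1$, both roll back simultaneously; rule (rbk) applies only if neither (comm) nor ($\tau$) applies. Then $\langle\vec\delta,\rho\rangle$ is compliant with $\langle\vec\gamma,\sigma\rangle$ if whenever $\langle\vec\delta,\rho\rangle\parallel\langle\vec\gamma,\sigma\rangle$ reduces in finitely many steps to a pair $\langle\vec\delta',\rho'\rangle\parallel\langle\vec\gamma',\sigma'\rangle$ with no further reduction, we have $\rho'=\mathbf 1$. A contract $\rho$ is compliant with $\sigma$ if $\langle[\,],\rho\rangle$ is compliant with $\langle[\,],\sigma\rangle$. The formal system derives judgments $\Gamma\vartriangleright\rho\dashv\sigma$, $\Gamma$ a set of expressions $\rho'\dashv\sigma'$, as finite trees with rules (applied modulo fold/unfold of recursion): (Ax) $\Gamma\vartriangleright\mathbf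 1\dashv\sigma$; (Hyp) $\Gamma,\rho\dashv\sigma\vartriangleright\rho\dashv\sigma$; $(+,+)$ if $\rho=\sum_{i\in I}\alpha_i.\rho_i$, $\sigma=\sum_{j\in J}\bar\alpha_j.\sigma_j$ are retractable choices and $k\in I\cap J$, from $\Gamma,\rho\dashv\sigma\vartriangleright\rho_k\dashv\sigma_k$ infer $\Gamma\vartriangleright\rho\dashv\sigma$; $(\oplus,+)$ from $\Gamma,\bigoplus_{i\in I}\bar a_i.\rho_i\dashv\sum_{j\in I\cup J}a_j.\sigma_j\vartriangleright\rho_i\dashv\sigma_i$ for all $i\in I$ infer $\Gamma\vartriangleright\bigoplus_{i\in I}\bar a_i.\rho_i\dashv\sum_{j\in I\cup J}a_j.\sigma_j$; $(+,\oplus)$ symmetrically, from $\Gamma,\sum_{j\in I\cup J}a_j.\sigma_j\dashv\bigoplus_{i\in I}\bar a_i.\rho_i\vartriangleright\rho_i\dashv\sigma_i$ for all $i\in I$ infer $\Gamma\vartriangleright\sum_{j\in I\cup J}a_j.\sigma_j\dashv\bigoplus_{i\in I}\bar a_i.\rho_i$. *)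

theory Defs
  imports Main "HOL-Library.FSet"
begin

section \<open>Retractable contracts (raw syntax, de Bruijn indices for recursion variables)\<close>

text \<open>A choice is a finite set of pairs
(name, continuation); for outputs the name stands for the coname.\<close>

datatype ctr =
    One
  | Inp "(nat \<times> ctr) fset"
  | ROut "(nat \<times> ctr) fset"
  | UOut "(nat \<times> ctr) fset"
  | Var nat
  | Rec ctr

primrec shift :: "nat \<Rightarrow> ctr \<Rightarrow> ctr" where
  "shift k One = One"
| "shift k (Inp S) = Inp (fimage (map_prod id (shift k)) S)"
| "shift k (ROut S) = ROut (fimage (map_prod id (shift k)) S)"
| "shift k (UOut S) = UOut (fimage (map_prod id (shift k)) S)"
| "shift k (Var n) = (if n < k then Var n else Var (Suc n))"
| "shift k (Rec s) = Rec (shift (Suc k) s)"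

text \<open>\<open>subst k t s\<close>: substitute \<open>t\<close> for the variable with index \<open>k\<close> in \<open>s\<close>
(removing that binder level).\<close>
primrec subst :: "nat \<Rightarrow> ctr \<Rightarrow> ctr \<Rightarrow> ctr" where
  "subst k t One = One"
| "subst k t (Inp S) = Inp (fimage (map_prod id (subst k t)) S)"
| "subst k t (ROut S) = ROut (fimage (map_prod id (subst k t)) S)"
| "subst k t (UOut S) = UOut (fimage (map_prod id (subst k t)) S)"
| "subst k t (Var n) = (if n = k then t else if k < n then Var (n - 1) else Var n)"
| "subst k t (Rec s) = Rec (subst (Suc k) (shift 0 t) s)"

definition choice_ok :: "(nat \<times> ctr) fset \<Rightarrow> bool" where
  "choice_ok S \<longleftrightarrow> S \<noteq> {||} \<and>
     (\<forall>a c d. (a, c) |\<in>| S \<longrightarrow> (a, d) |\<in>| S \<longrightarrow> c = d)"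

inductive wf_at :: "nat \<Rightarrow> ctr \<Rightarrow> bool" where
  "wf_at k One"
| "choice_ok S \<Longrightarrow> (\<forall>(a, c) \<in> fset S. wf_at k c) \<Longrightarrow> wf_at k (Inp S)"
| "choice_ok S \<Longrightarrow> (\<forall>(a, c) \<in> fset S. wf_at k c) \<Longrightarrow> wf_at k (ROut S)"
| "choice_ok S \<Longrightarrow> (\<forall>(a, c) \<in> fset S. wf_at k c) \<Longrightarrow> wf_at k (UOut S)"
| "n < k \<Longrightarrow> wf_at k (Var n)"
| "wf_at (Suc k) s \<Longrightarrow> \<not> (\<exists>n. s = Var n) \<Longrightarrow> wf_at k (Rec s)"

definition rcontract :: "ctr \<Rightarrow> bool" where
  "rcontract s \<longleftrightarrow> wf_at 0 s"

section \<open>Identification: fold/unfold of recursion (as a congruence), and the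
double reading of unary outputs\<close>

inductive conv1 :: "ctr \<Rightarrow> ctr \<Rightarrow> bool" where
  unfold: "conv1 (Rec s) (subst 0 (Rec s) s)"
| rec_cong: "conv1 s s' \<Longrightarrow> conv1 (Rec s) (Rec s')"
| inp_cong: "(a, c) |\<in>| S \<Longrightarrow> conv1 c c' \<Longrightarrow>
     conv1 (Inp S) (Inp (finsert (a, c') (S |-| {|(a, c)|})))"
| rout_cong: "(a, c) |\<in>| S \<Longrightarrow> conv1 c c' \<Longrightarrow>
     conv1 (ROut S) (ROut (finsert (a, c') (S |-| {|(a, c)|})))"
| uout_cong: "(a, c) |\<in>| S \<Longrightarrow> conv1 c c' \<Longrightarrow>
     conv1 (UOut S) (UOut (finsert (a, c') (S |-| {|(a, c)|})))"
| unary: "conv1 (ROut {|x|}) (UOut {|x|})"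

text \<open>The identification is taken between well-formed expressions only (so that no
ill-formed intermediate term, e.g. one with a repeated name in a choice, can be used).\<close>
definition wfo :: "ctr \<Rightarrow> bool" where
  "wfo x \<longleftrightarrow> (\<exists>k. wf_at k x)"

definition eqv :: "ctr \<Rightarrow> ctr \<Rightarrow> bool" where
  "eqv = equivclp (\<lambda>x y. conv1 x y \<and> wfo x \<and> wfo y)"

text \<open>\<open>Circ\<close> is the special symbol \<open>\<circ>\<close>. A history is a stack, represented by a list
whose head is the top of the stack.\<close>
datatype cst = Circ | C ctr

type_synonym cfg = "cst list \<times> cst"

datatype lab = LIn nat | LOut nat | LTau | LRb

fun dual :: "lab \<Rightarrow> lab" where
  "dual (LIn a) = LOut a"
| "dual (LOut a) = LIn a"
| "dual l = l"

inductive ltr :: "cfg \<Rightarrow> lab \<Rightarrow> cfg \<Rightarrow> bool" where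
  inp_sum: "eqv s (Inp S) \<Longrightarrow> (a, c) |\<in>| S \<Longrightarrow> 2 \<le> fcard S \<Longrightarrow>
     ltr (h, C s) (LIn a) (C (Inp (S |-| {|(a, c)|})) # h, C c)"
| rout_sum: "eqv s (ROut S) \<Longrightarrow> (a, c) |\<in>| S \<Longrightarrow> 2 \<le> fcard S \<Longrightarrow>
     ltr (h, C s) (LOut a) (C (ROut (S |-| {|(a, c)|})) # h, C c)"
| uout_tau: "eqv s (UOut S) \<Longrightarrow> (a, c) |\<in>| S \<Longrightarrow> 2 \<le> fcard S \<Longrightarrow>
     ltr (h, C s) LTau (h, C (UOut {|(a, c)|}))"
| inp_one: "eqv s (Inp {|(a, c)|}) \<Longrightarrow> ltr (h, C s) (LIn a) (Circ # h, C c)"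
| out_one: "eqv s (ROut {|(a, c)|}) \<Longrightarrow> ltr (h, C s) (LOut a) (Circ # h, C c)"
| rb: "ltr (x # h, s) LRb (h, x)"

definition is_one :: "cst \<Rightarrow> bool" where
  "is_one x \<longleftrightarrow> (\<exists>r. x = C r \<and> eqv r One)"

inductive red_ct :: "cfg \<times> cfg \<Rightarrow> cfg \<times> cfg \<Rightarrow> bool" where
  comm: "ltr c l c' \<Longrightarrow> ltr s (dual l) s' \<Longrightarrow> l \<noteq> LTau \<Longrightarrow> l \<noteq> LRb \<Longrightarrow>
     red_ct (c, s) (c', s')"
| tau_l: "ltr c LTau c' \<Longrightarrow> red_ct (c, s) (c', s)"
| tau_r: "ltr s LTau s' \<Longrightarrow> red_ct (c, s) (c, s')"

inductive red :: "cfg \<times> cfg \<Rightarrow> cfg \<times> cfg \<Rightarrow> bool" where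
  ct: "red_ct p q \<Longrightarrow> red p q"
| rbk: "ltr c LRb c' \<Longrightarrow> ltr s LRb s' \<Longrightarrow> \<not> is_one (snd c) \<Longrightarrow>
     \<not> (\<exists>q. red_ct (c, s) q) \<Longrightarrow> red (c, s) (c', s')"

definition compliant_cfg :: "cfg \<Rightarrow> cfg \<Rightarrow> bool" where
  "compliant_cfg c s \<longleftrightarrow>
     (\<forall>c' s'. red\<^sup>*\<^sup>* (c, s) (c', s') \<longrightarrow> \<not> (\<exists>q. red (c', s') q) \<longrightarrow> is_one (snd c'))"

definition compliant :: "ctr \<Rightarrow> ctr \<Rightarrow> bool" where
  "compliant r s \<longleftrightarrow> compliant_cfg ([], C r) ([], C s)"

inductive deriv :: "(ctr \<times> ctr) set \<Rightarrow> ctr \<Rightarrow> ctr \<Rightarrow> bool" where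
  Ax: "eqv r One \<Longrightarrow> deriv \<Gamma> r s"
| Hyp: "(r', s') \<in> \<Gamma> \<Longrightarrow> eqv r r' \<Longrightarrow> eqv s s' \<Longrightarrow> deriv \<Gamma> r s"
| PlusPlus_io: "eqv r (Inp R) \<Longrightarrow> eqv s (ROut S) \<Longrightarrow> (a, rk) |\<in>| R \<Longrightarrow> (a, sk) |\<in>| S \<Longrightarrow>
     deriv (insert (r, s) \<Gamma>) rk sk \<Longrightarrow> deriv \<Gamma> r s"
| PlusPlus_oi: "eqv r (ROut R) \<Longrightarrow> eqv s (Inp S) \<Longrightarrow> (a, rk) |\<in>| R \<Longrightarrow> (a, sk) |\<in>| S \<Longrightarrow>
     deriv (insert (r, s) \<Gamma>) rk sk \<Longrightarrow> deriv \<Gamma> r s"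
| OplusPlus: "eqv r (UOut R) \<Longrightarrow> eqv s (Inp S) \<Longrightarrow> fst |`| R |\<subseteq>| fst |`| S \<Longrightarrow>
     (\<forall>a ra sa. (a, ra) |\<in>| R \<longrightarrow> (a, sa) |\<in>| S \<longrightarrow> deriv (insert (r, s) \<Gamma>) ra sa) \<Longrightarrow>
     deriv \<Gamma> r s"
| PlusOplus: "eqv r (Inp R) \<Longrightarrow> eqv s (UOut S) \<Longrightarrow> fst |`| S |\<subseteq>| fst |`| R \<Longrightarrow>
     (\<forall>a ra sa. (a, ra) |\<in>| R \<longrightarrow> (a, sa) |\<in>| S \<longrightarrow> deriv (insert (r, s) \<Gamma>) ra sa) \<Longrightarrow>
     deriv \<Gamma> r s"

end

theory Submission
  imports Defs
begin


lemma fimage_id_on: "(\<And>x. x |\<in>| S \<Longrightarrow> f x = x) \<Longrightarrow> f |`| S = S"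
  by (metis fimage_cong fimage_ident id_apply)

lemma wf_mono: "wf_at k t \<Longrightarrow> \<forall>m\<ge>k. wf_at m t"
proof (induction rule: wf_at.induct)
  case (2 S k) then show ?case by (auto intro!: wf_at.intros)
next
  case (3 S k) then show ?case by (auto intro!: wf_at.intros)
next
  case (4 S k) then show ?case by (auto intro!: wf_at.intros)
qed (auto intro: wf_at.intros)

lemma wf_mono': "wf_at k t \<Longrightarrow> k \<le> m \<Longrightarrow> wf_at m t"
  using wf_mono by blast

lemma shift_id: "wf_at k t \<Longrightarrow> shift k t = t"
proof (induction rule: wf_at.induct)
  case (2 S k) then show ?case by (auto intro!: fimage_id_on)
next
  case (3 S k) then show ?case by (auto intro!: fimage_id_on)
next
  case (4 S k) then show ?case by (auto intro!: fimage_id_on)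
qed auto

lemma subst_id: "wf_at k t \<Longrightarrow> \<forall>u. subst k u t = t"
proof (induction rule: wf_at.induct)
  case (2 S k) then show ?case by (auto intro!: fimage_id_on)
next
  case (3 S k) then show ?case by (auto intro!: fimage_id_on)
next
  case (4 S k) then show ?case by (auto intro!: fimage_id_on)
qed auto

section \<open>Head signatures\<close>

datatype sig = SOne | SIn "nat fset" | SR "nat fset" | SU "nat fset"

definition scons :: "'a \<Rightarrow> (nat \<Rightarrow> 'a) \<Rightarrow> nat \<Rightarrow> 'a" where
  "scons v r = (\<lambda>i. case i of 0 \<Rightarrow> v | Suc j \<Rightarrow> r j)"

primrec hs :: "(nat \<Rightarrow> sig) \<Rightarrow> ctr \<Rightarrow> sig" where
  "hs r One = SOne"
| "hs r (Inp S) = SIn (fst |`| S)"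
| "hs r (ROut S) = SR (fst |`| S)"
| "hs r (UOut S) = (if 2 \<le> fcard (fst |`| S) then SU (fst |`| S) else SR (fst |`| S))"
| "hs r (Var n) = r n"
| "hs r (Rec s) = hs (scons SOne r) s"

lemma names_map[simp]: "fst |`| (map_prod id f |`| S) = fst |`| S"
  by (simp add: fset.map_comp comp_def)

lemma hs_shift: "hs r (shift k t) = hs (\<lambda>i. if i < k then r i else r (Suc i)) t"
proof (induction t arbitrary: r k)
  case (Rec t)
  have "scons SOne (\<lambda>i. if i < k then r i else r (Suc i)) =
        (\<lambda>i. if i < Suc k then scons SOne r i else scons SOne r (Suc i))"
    by (auto simp: fun_eq_iff scons_def split: nat.split)
  then show ?case using Rec by simp
qed auto

lemma hs_subst: "hs r (subst k t s) = hs (\<lambda>i. if i < k then r i else if i = k then hs r t else r (i - 1)) s"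
proof (induction s arbitrary: r k t)
  case (Rec s)
  have e: "hs (scons SOne r) (shift 0 t) = hs r t"
    by (simp add: hs_shift scons_def)
  have "scons SOne (\<lambda>i. if i < k then r i else if i = k then hs r t else r (i - 1)) =
        (\<lambda>i. if i < Suc k then scons SOne r i else if i = Suc k then hs (scons SOne r) (shift 0 t) else scons SOne r (i - 1))"
    unfolding e by (auto simp: fun_eq_iff scons_def split: nat.split)
  then show ?case using Rec by simp
qed auto

primrec hg :: "nat \<Rightarrow> ctr \<Rightarrow> bool" where
  "hg k One = True"
| "hg k (Inp S) = True"
| "hg k (ROut S) = True"
| "hg k (UOut S) = True"
| "hg k (Var n) = (n \<noteq> k)"
| "hg k (Rec s) = hg (Suc k) s"

lemma hs_hg: "hg k s \<Longrightarrow> hs (r(k := v)) s = hs r s"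
proof (induction s arbitrary: k r)
  case (Rec s)
  have "scons SOne (r(k := v)) = (scons SOne r)(Suc k := v)"
    by (auto simp: fun_eq_iff scons_def split: nat.split)
  then have "hs (r(k := v)) (Rec s) = hs ((scons SOne r)(Suc k := v)) s" by simp
  also have "\<dots> = hs (scons SOne r) s" using Rec.IH[of "Suc k" "scons SOne r"] Rec.prems by (simp only: hg.simps)
  finally show ?case by (simp only: hs.simps)
qed auto

lemma wf_hg: "wf_at m t \<Longrightarrow> (\<forall>n. t \<noteq> Var n) \<Longrightarrow> hg j t"
proof (induction t arbitrary: m j)
  case (Rec s)
  then show ?case by (auto elim: wf_at.cases)
qed auto

lemma wf_Rec_inv: "wf_at k (Rec s) \<Longrightarrow> wf_at (Suc k) s \<and> (\<forall>n. s \<noteq> Var n)"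
  by (auto elim: wf_at.cases)

lemma names_replace: "(a, c) |\<in>| S \<Longrightarrow> fst |`| finsert (a, c') (S |-| {|(a, c)|}) = fst |`| S"
proof -
  assume a: "(a, c) |\<in>| S"
  then have "S = finsert (a,c) (S |-| {|(a,c)|})" by auto
  then have "fst |`| S = finsert a (fst |`| (S |-| {|(a,c)|}))" by (metis fimage_finsert fst_conv)
  then show ?thesis by simp
qed

lemma fcard_single[simp]: "fcard {|a|} = 1"
  by (simp add: fcard_finsert_if)

lemma conv1_hs: "conv1 u v \<Longrightarrow> wfo u \<Longrightarrow> hs r u = hs r v"
proof (induction arbitrary: r rule: conv1.induct)
  case (unfold s)
  then obtain k where "wf_at k (Rec s)" by (auto simp: wfo_def)
  then have "hg 0 s" using wf_Rec_inv wf_hg by blast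
  have "hs r (subst 0 (Rec s) s) = hs ((scons SOne r)(0 := hs r (Rec s))) s"
    by (simp add: hs_subst) (rule arg_cong[where f="\<lambda>x. hs x s"], auto simp: fun_eq_iff scons_def split: nat.split)
  also have "\<dots> = hs (scons SOne r) s" using hs_hg[OF \<open>hg 0 s\<close>] by blast
  finally show ?case by simp
next
  case (rec_cong s s')
  then have "wfo s" by (auto simp: wfo_def dest: wf_Rec_inv)
  then show ?case using rec_cong by simp
next
  case (inp_cong a c S c') then show ?case by (simp only: hs.simps names_replace[OF inp_cong(1)])
next
  case (rout_cong a c S c') then show ?case by (simp only: hs.simps names_replace[OF rout_cong(1)])
next
  case (uout_cong a c S c') then show ?case by (simp only: hs.simps names_replace[OF uout_cong(1)])
qed simp

lemma eqv_hs: "eqv x y \<Longrightarrow> hs r x = hs r y"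
  unfolding eqv_def
proof (induction rule: equivclp_induct)
  case (step y z)
  then show ?case using conv1_hs by metis
qed simp

lemma eqv_wfo: "eqv x y \<Longrightarrow> wfo x \<Longrightarrow> wfo y"
  unfolding eqv_def
  by (induction rule: equivclp_induct) auto

lemma eqv_sym: "eqv x y \<Longrightarrow> eqv y x"
  unfolding eqv_def by (rule equivclp_sym)

lemma eqv_trans: "eqv x y \<Longrightarrow> eqv y z \<Longrightarrow> eqv x z"
  unfolding eqv_def by (rule equivclp_trans)

lemma eqv_refl[simp]: "eqv x x"
  unfolding eqv_def by simp

lemma conv1_eqv: "conv1 x y \<Longrightarrow> wfo x \<Longrightarrow> wfo y \<Longrightarrow> eqv x y"
  unfolding eqv_def by auto

section \<open>Closing substitutions and regularity\<close>

primrec csub :: "nat \<Rightarrow> ctr list \<Rightarrow> ctr \<Rightarrow> ctr" where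
  "csub d e One = One"
| "csub d e (Inp S) = Inp (map_prod id (csub d e) |`| S)"
| "csub d e (ROut S) = ROut (map_prod id (csub d e) |`| S)"
| "csub d e (UOut S) = UOut (map_prod id (csub d e) |`| S)"
| "csub d e (Var n) = (if n < d then Var n else if n - d < length e then e ! (n - d) else Var (n - length e))"
| "csub d e (Rec s) = Rec (csub (Suc d) e s)"

lemma csub_nil: "csub d [] u = u"
  by (induction u arbitrary: d) (auto intro!: fimage_id_on)

lemma subst_csub:
  assumes "\<forall>x\<in>set e. wf_at 0 x" "wf_at 0 t"
  shows "subst d t (csub (Suc d) e s) = csub d (t # e) s"
  using assms
proof (induction s arbitrary: d)
  case (Inp S) then show ?case by (auto simp: fset.map_comp comp_def intro!: fimage_cong)
next
  case (ROut S) then show ?case by (auto simp: fset.map_comp comp_def intro!: fimage_cong)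
next
  case (UOut S) then show ?case by (auto simp: fset.map_comp comp_def intro!: fimage_cong)
next
  case (Var n)
  show ?case
  proof (cases "n < d")
    case True then show ?thesis by simp
  next
    case False
    show ?thesis
    proof (cases "n = d")
      case True then show ?thesis by simp
    next
      case nd: False
      show ?thesis
      proof (cases "n - Suc d < length e")
        case True
        then have "wf_at 0 (e ! (n - Suc d))" using Var by auto
        then have "wf_at d (e ! (n - Suc d))" using wf_mono' by blast
        then show ?thesis using True False nd subst_id
          by (auto simp: nth_Cons' split: if_splits)
      next
        case False2: False
        then show ?thesis using False nd by auto
      qed
    qed
  qed
next
  case (Rec s)
  then show ?case using shift_id[of 0 t] by simp
qed simp

lemma choice_ok_map: "choice_ok S \<Longrightarrow> choice_ok (map_prod id f |`| S)"
  unfolding choice_ok_def by (auto; metis)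

lemma csub_nonvar: "(\<forall>n. s \<noteq> Var n) \<Longrightarrow> (\<forall>n. csub d e s \<noteq> Var n)"
  by (cases s) auto

lemma wf_csub: "wf_at m u \<Longrightarrow> \<forall>d. m = d + length e \<longrightarrow> (\<forall>x\<in>set e. wf_at 0 x) \<longrightarrow> wf_at d (csub d e u)"
proof (induction rule: wf_at.induct)
  case (2 S k) then show ?case by (auto intro!: wf_at.intros choice_ok_map)
next
  case (3 S k) then show ?case by (auto intro!: wf_at.intros choice_ok_map)
next
  case (4 S k) then show ?case by (auto intro!: wf_at.intros choice_ok_map)
next
  case (5 n k)
  show ?case
  proof (intro allI impI)
    fix d assume a: "k = d + length e" "\<forall>x\<in>set e. wf_at 0 x"
    show "wf_at d (csub d e (Var n))"
    proof (cases "n < d")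
      case True then show ?thesis by (auto intro: wf_at.intros)
    next
      case False
      then have "n - d < length e" using 5 a by auto
      then have "wf_at 0 (e ! (n - d))" using a by auto
      then show ?thesis using False \<open>n - d < length e\<close> wf_mono' by auto
    qed
  qed
next
  case (6 k s)
  then show ?case using csub_nonvar by (auto intro!: wf_at.intros)
qed (auto intro: wf_at.intros)

lemma wf_csub': "wf_at (length e) u \<Longrightarrow> \<forall>x\<in>set e. wf_at 0 x \<Longrightarrow> wf_at 0 (csub 0 e u)"
  using wf_csub by fastforce

lemma wf_unfold: "wf_at 0 (Rec s) \<Longrightarrow> wf_at 0 (subst 0 (Rec s) s)"
proof -
  assume a: "wf_at 0 (Rec s)"
  then have "wf_at 1 s" using wf_Rec_inv by simp
  have "subst 0 (Rec s) s = subst 0 (Rec s) (csub 1 [] s)" by (simp add: csub_nil)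
  also have "\<dots> = csub 0 [Rec s] s" using subst_csub[of "[]" "Rec s" 0 s] a by simp
  finally show ?thesis using wf_csub'[of "[Rec s]" s] \<open>wf_at 1 s\<close> a by simp
qed

primrec reach :: "ctr list \<Rightarrow> ctr \<Rightarrow> ctr set" where
  "reach e One = {One}"
| "reach e (Inp S) = insert (csub 0 e (Inp S)) (\<Union> (snd ` fset (map_prod id (reach e) |`| S)))"
| "reach e (ROut S) = insert (csub 0 e (ROut S)) (\<Union> (snd ` fset (map_prod id (reach e) |`| S)))"
| "reach e (UOut S) = insert (csub 0 e (UOut S)) (\<Union> (snd ` fset (map_prod id (reach e) |`| S)))"
| "reach e (Var n) = {csub 0 e (Var n)}"
| "reach e (Rec s) = insert (csub 0 e (Rec s)) (reach (csub 0 e (Rec s) # e) s)"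

lemma reach_finite: "finite (reach e u)"
proof (induction u arbitrary: e)
  case (Inp S) then show ?case by (force intro!: finite_Union)
next
  case (ROut S) then show ?case by (force intro!: finite_Union)
next
  case (UOut S) then show ?case by (force intro!: finite_Union)
qed auto

lemma reach_self: "csub 0 e u \<in> reach e u"
  by (cases u) auto

lemma reach_child: "(a, c) |\<in>| S \<Longrightarrow> u = Inp S \<or> u = ROut S \<or> u = UOut S \<Longrightarrow> reach e c \<subseteq> reach e u"
  by (auto intro!: bexI[where x="(a, reach e c)"]) (metis snd_conv)+

inductive goodenv :: "ctr set \<Rightarrow> ctr list \<Rightarrow> bool" where
  "goodenv R []"
| "goodenv R e \<Longrightarrow> reach e (Rec s) \<subseteq> R \<Longrightarrow> wf_at 0 (csub 0 e (Rec s)) \<Longrightarrow>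
   goodenv R (csub 0 e (Rec s) # e)"

lemma goodenv_closed: "goodenv R e \<Longrightarrow> \<forall>x\<in>set e. wf_at 0 x"
  by (induction rule: goodenv.induct) auto

lemma goodenv_nth: "goodenv R e \<Longrightarrow> i < length e \<Longrightarrow>
   \<exists>e' s. e ! i = csub 0 e' (Rec s) \<and> goodenv R e' \<and> reach e' (Rec s) \<subseteq> R \<and> wf_at 0 (e ! i)"
proof (induction arbitrary: i rule: goodenv.induct)
  case (2 R e s)
  then show ?case by (cases i) (auto intro: goodenv.intros)
qed simp

definition clos :: "ctr set \<Rightarrow> ctr \<Rightarrow> bool" where
  "clos R x \<longleftrightarrow> (\<forall>s. x = Rec s \<longrightarrow> subst 0 (Rec s) s \<in> R) \<and>
     (\<forall>S a c. (x = Inp S \<or> x = ROut S \<or> x = UOut S) \<longrightarrow> (a, c) |\<in>| S \<longrightarrow> c \<in> R)"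

lemma unfold_csub:
  assumes "\<forall>x\<in>set e. wf_at 0 x" "wf_at 0 (csub 0 e (Rec s))"
  shows "subst 0 (csub 0 e (Rec s)) (csub 1 e s) = csub 0 (csub 0 e (Rec s) # e) s"
  using subst_csub[OF assms, of 0 s] by simp

lemma reach_clos: "goodenv R e \<Longrightarrow> reach e u \<subseteq> R \<Longrightarrow> wf_at (length e) u \<Longrightarrow> \<forall>x\<in>reach e u. clos R x"
proof (induction u arbitrary: e)
  case One then show ?case by (simp add: clos_def)
next
  case (Inp S)
  have wfc: "\<And>a c. (a, c) |\<in>| S \<Longrightarrow> wf_at (length e) c" using Inp.prems(3) by (auto elim: wf_at.cases)
  have sub: "\<And>a c. (a, c) |\<in>| S \<Longrightarrow> reach e c \<subseteq> R" using Inp.prems(2) reach_child by blast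
  have "clos R (csub 0 e (Inp S))"
    unfolding clos_def using sub reach_self by fastforce
  moreover have "\<forall>x\<in>reach e c. clos R x" if "(a, c) |\<in>| S" for a c
    using Inp.IH[of "(a,c)" c e] Inp.prems(1) sub[OF that] wfc[OF that] that by auto
  ultimately show ?case by (auto; metis snd_conv)
next
  case (ROut S)
  have wfc: "\<And>a c. (a, c) |\<in>| S \<Longrightarrow> wf_at (length e) c" using ROut.prems(3) by (auto elim: wf_at.cases)
  have sub: "\<And>a c. (a, c) |\<in>| S \<Longrightarrow> reach e c \<subseteq> R" using ROut.prems(2) reach_child by blast
  have "clos R (csub 0 e (ROut S))"
    unfolding clos_def using sub reach_self by fastforce
  moreover have "\<forall>x\<in>reach e c. clos R x" if "(a, c) |\<in>| S" for a c
    using ROut.IH[of "(a,c)" c e] ROut.prems(1) sub[OF that] wfc[OF that] that by auto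
  ultimately show ?case by (auto; metis snd_conv)
next
  case (UOut S)
  have wfc: "\<And>a c. (a, c) |\<in>| S \<Longrightarrow> wf_at (length e) c" using UOut.prems(3) by (auto elim: wf_at.cases)
  have sub: "\<And>a c. (a, c) |\<in>| S \<Longrightarrow> reach e c \<subseteq> R" using UOut.prems(2) reach_child by blast
  have "clos R (csub 0 e (UOut S))"
    unfolding clos_def using sub reach_self by fastforce
  moreover have "\<forall>x\<in>reach e c. clos R x" if "(a, c) |\<in>| S" for a c
    using UOut.IH[of "(a,c)" c e] UOut.prems(1) sub[OF that] wfc[OF that] that by auto
  ultimately show ?case by (auto; metis snd_conv)
next
  case (Var n)
  then have n: "n < length e" by (auto elim: wf_at.cases)
  obtain e' s where es: "e ! n = csub 0 e' (Rec s)" "goodenv R e'" "reach e' (Rec s) \<subseteq> R" "wf_at 0 (e ! n)"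
    using goodenv_nth[OF Var(1) n] by blast
  have "subst 0 (csub 0 e' (Rec s)) (csub 1 e' s) \<in> R"
    using unfold_csub[OF goodenv_closed[OF es(2)], of s] es reach_self[of "csub 0 e' (Rec s) # e'" s] by auto
  then show ?case using n es by (auto simp: clos_def)
next
  case (Rec s)
  let ?x = "csub 0 e (Rec s)"
  have cl: "\<forall>x\<in>set e. wf_at 0 x" using goodenv_closed[OF Rec.prems(1)] .
  have wx: "wf_at 0 ?x" using wf_csub'[OF Rec.prems(3) cl] .
  have ge: "goodenv R (?x # e)" by (rule goodenv.intros(2)[OF Rec.prems(1) Rec.prems(2) wx])
  have ws: "wf_at (length (?x # e)) s" using Rec.prems(3) by (auto dest: wf_Rec_inv)
  have "clos R ?x"
    using unfold_csub[OF cl wx] reach_self[of "?x # e" s] Rec.prems(2) by (auto simp: clos_def)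
  moreover have "\<forall>x\<in>reach (?x # e) s. clos R x"
    using Rec.IH[OF ge _ ws] Rec.prems(2) by auto
  ultimately show ?case by auto
qed

lemma reach_wf: "wf_at (length e) u \<Longrightarrow> \<forall>x\<in>set e. wf_at 0 x \<Longrightarrow> \<forall>x\<in>reach e u. wf_at 0 x"
proof (induction u arbitrary: e)
  case (Inp S)
  have "\<And>a c. (a, c) |\<in>| S \<Longrightarrow> wf_at (length e) c" using Inp.prems by (auto elim: wf_at.cases)
  then show ?case using Inp wf_csub'[OF Inp.prems] by (auto; metis snd_conv)
next
  case (ROut S)
  have "\<And>a c. (a, c) |\<in>| S \<Longrightarrow> wf_at (length e) c" using ROut.prems by (auto elim: wf_at.cases)
  then show ?case using ROut wf_csub'[OF ROut.prems] by (auto; metis snd_conv)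
next
  case (UOut S)
  have "\<And>a c. (a, c) |\<in>| S \<Longrightarrow> wf_at (length e) c" using UOut.prems by (auto elim: wf_at.cases)
  then show ?case using UOut wf_csub'[OF UOut.prems] by (auto; metis snd_conv)
next
  case (Var n)
  then show ?case using wf_csub'[OF Var.prems] by simp
next
  case (Rec s)
  let ?x = "csub 0 e (Rec s)"
  have wx: "wf_at 0 ?x" using wf_csub'[OF Rec.prems] .
  have ws: "wf_at (length (?x # e)) s" using Rec.prems(1) by (auto dest: wf_Rec_inv)
  show ?case using Rec.IH[OF ws] wx Rec.prems(2) by auto
qed (auto intro: wf_at.intros)

definition RS :: "ctr \<Rightarrow> ctr set" where "RS t = reach [] t"

lemma RS_props:
  assumes "wf_at 0 t"
  shows "finite (RS t)" "t \<in> RS t" "\<forall>x\<in>RS t. clos (RS t) x" "\<forall>x\<in>RS t. wf_at 0 x"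
proof -
  show "finite (RS t)" by (simp add: RS_def reach_finite)
  show "t \<in> RS t" using reach_self[of "[]" t] by (simp add: RS_def csub_nil)
  show "\<forall>x\<in>RS t. clos (RS t) x" using reach_clos[of "RS t" "[]" t] assms
    by (simp add: RS_def goodenv.intros)
  show "\<forall>x\<in>RS t. wf_at 0 x" using reach_wf[of "[]" t] assms by (simp add: RS_def)
qed



primrec nrec :: "ctr \<Rightarrow> nat" where
  "nrec One = 0"
| "nrec (Inp S) = 0"
| "nrec (ROut S) = 0"
| "nrec (UOut S) = 0"
| "nrec (Var n) = 0"
| "nrec (Rec s) = Suc (nrec s)"

lemma nrec_subst: "hg k s \<Longrightarrow> nrec (subst k t s) = nrec s"
  by (induction s arbitrary: k t) auto

lemma fset_single: "S \<noteq> {||} \<Longrightarrow> \<not> 2 \<le> fcard S \<Longrightarrow> \<exists>p. S = {|p|}"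
proof -
  assume a: "S \<noteq> {||}" "\<not> 2 \<le> fcard S"
  then have "fcard S = 1" using fcard_0_eq[of S] by linarith
  then have "card (fset S) = 1" by (simp add: fcard.rep_eq)
  then obtain p where "fset S = {p}" using card_1_singletonE by blast
  then have "S = {|p|}" by (metis bot_fset.rep_eq finsert.rep_eq fset_inject)
  then show ?thesis by blast
qed

definition hf :: "ctr \<Rightarrow> bool" where
  "hf x \<longleftrightarrow> x = One \<or> (\<exists>S. x = Inp S) \<or> (\<exists>S. x = ROut S) \<or> (\<exists>S. x = UOut S \<and> 2 \<le> fcard S)"

definition kids_in :: "ctr set \<Rightarrow> ctr \<Rightarrow> bool" where
  "kids_in R y \<longleftrightarrow> (\<forall>S a c. (y = Inp S \<or> y = ROut S \<or> y = UOut S) \<longrightarrow> (a, c) |\<in>| S \<longrightarrow> c \<in> R)"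

inductive_cases wfUOutE: "wf_at k (UOut S)"
inductive_cases wfVarE: "wf_at k (Var n)"

lemma wf_at_UOut_ROut: "wf_at k (UOut S) \<Longrightarrow> wf_at k (ROut S)"
  by (erule wfUOutE) (auto intro: wf_at.intros)

lemma hnf_exists:
  assumes R: "\<forall>x\<in>R. clos R x \<and> wf_at 0 x"
  shows "x \<in> R \<Longrightarrow> \<exists>y. eqv x y \<and> wf_at 0 y \<and> hf y \<and> kids_in R y"
proof (induction "nrec x" arbitrary: x rule: less_induct)
  case less
  have cx: "clos R x" and wx: "wf_at 0 x" using R less.prems by auto
  show ?case
  proof (cases x)
    case One then show ?thesis using wx by (intro exI[of _ One]) (auto simp: hf_def kids_in_def)
  next
    case (Inp S) then show ?thesis using wx cx by (intro exI[of _ x]) (auto simp: hf_def kids_in_def clos_def)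
  next
    case (ROut S) then show ?thesis using wx cx by (intro exI[of _ x]) (auto simp: hf_def kids_in_def clos_def)
  next
    case (UOut S)
    show ?thesis
    proof (cases "2 \<le> fcard S")
      case True then show ?thesis using wx cx UOut by (intro exI[of _ x]) (auto simp: hf_def kids_in_def clos_def)
    next
      case False
      have "wf_at 0 (UOut S)" using wx UOut by simp
      then have "choice_ok S" by (rule wfUOutE)
      then have "S \<noteq> {||}" by (simp add: choice_ok_def)
      then obtain p where p: "S = {|p|}" using fset_single[OF _ False] by blast
      have w2: "wf_at 0 (ROut S)" using wx UOut wf_at_UOut_ROut by simp
      have "wfo (ROut S)" "wfo x" using w2 wx unfolding wfo_def by blast+
      then have "eqv (ROut S) x" using conv1_eqv[OF conv1.unary[of p]] UOut p by simp
      then have "eqv x (ROut S)" by (rule eqv_sym)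
      then show ?thesis using w2 cx UOut by (intro exI[of _ "ROut S"]) (auto simp: hf_def kids_in_def clos_def)
    qed
  next
    case (Var n) then have "wf_at 0 (Var n)" using wx by simp
    then show ?thesis by (rule wfVarE) simp
  next
    case (Rec s)
    let ?x' = "subst 0 (Rec s) s"
    have in': "?x' \<in> R" using cx Rec by (simp add: clos_def)
    have "wf_at 1 s \<and> (\<forall>n. s \<noteq> Var n)" using wf_Rec_inv[of 0 s] wx Rec by simp
    then have "hg 0 s" using wf_hg by blast
    then have lt: "nrec ?x' < nrec x" using Rec nrec_subst by simp
    have w': "wf_at 0 ?x'" using wf_unfold wx Rec by simp
    have "wfo x" "wfo ?x'" using w' wx unfolding wfo_def by blast+
    then have e: "eqv x ?x'" using conv1_eqv[OF conv1.unfold[of s]] Rec by simp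
    obtain y where "eqv ?x' y \<and> wf_at 0 y \<and> hf y \<and> kids_in R y" using less.hyps[OF lt in'] by blast
    then show ?thesis using e eqv_trans by blast
  qed
qed



section \<open>Semantics\<close>

definition sg :: "ctr \<Rightarrow> sig" where "sg x = hs (\<lambda>_. SOne) x"

lemma eqv_sg: "eqv x y \<Longrightarrow> sg x = sg y"
  unfolding sg_def by (rule eqv_hs)

lemma eqv_cases: "eqv x y \<Longrightarrow> x = y \<or> (wfo x \<and> wfo y)"
  unfolding eqv_def
proof (induction rule: equivclp_induct)
  case (step y z) then show ?case by auto
qed simp

lemma fcard_names: "choice_ok S \<Longrightarrow> fcard (fst |`| S) = fcard S"
proof -
  assume c: "choice_ok S"
  have "inj_on fst (fset S)"
    using c unfolding choice_ok_def inj_on_def by auto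
  then show ?thesis by (simp add: fcard.rep_eq fimage.rep_eq card_image)
qed

lemma mem_names: "(a, c) |\<in>| S \<Longrightarrow> a |\<in>| fst |`| S"
  by (metis fimage_eqI fst_conv)

definition okz :: "ctr \<Rightarrow> bool" where
  "okz z \<longleftrightarrow> (\<forall>S. z = UOut S \<longrightarrow> choice_ok S)"

lemma wfo_choice: "wfo (UOut S) \<Longrightarrow> choice_ok S"
  unfolding wfo_def by (auto elim: wfUOutE)

lemma wfo_okz: "wfo z \<Longrightarrow> okz z"
  unfolding okz_def using wfo_choice by blast

lemma sg_UOut_SU: "eqv z (UOut S) \<Longrightarrow> okz z \<Longrightarrow> 2 \<le> fcard S \<Longrightarrow> \<exists>N. sg z = SU N"
proof -
  assume e: "eqv z (UOut S)" and o: "okz z" and f: "2 \<le> fcard S"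
  have "choice_ok S" using eqv_cases[OF e] o wfo_choice by (auto simp: okz_def)
  then have "2 \<le> fcard (fst |`| S)" using f fcard_names by simp
  then show ?thesis using eqv_sg[OF e] by (auto simp: sg_def)
qed

lemma lab_in: "ltr (h, C z) (LIn a) q \<Longrightarrow> \<exists>N. sg z = SIn N \<and> a |\<in>| N"
  by (erule ltr.cases) (auto dest!: eqv_sg simp: sg_def intro: mem_names)

lemma lab_out: "ltr (h, C z) (LOut a) q \<Longrightarrow> \<exists>N. sg z = SR N \<and> a |\<in>| N"
  by (erule ltr.cases) (auto dest!: eqv_sg simp: sg_def intro: mem_names)

lemma lab_tau: "ltr (h, C z) LTau q \<Longrightarrow> okz z \<Longrightarrow> \<exists>N. sg z = SU N"
  by (erule ltr.cases) (auto intro: sg_UOut_SU)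

lemma ltr_Circ: "ltr (h, Circ) l q \<Longrightarrow> l = LRb"
  by (erule ltr.cases) auto

lemma ltr_rb_nonempty: "ltr (h, x) LRb q \<Longrightarrow> h \<noteq> []"
  by (erule ltr.cases) auto

lemma is_one_sg: "is_one (C z) \<Longrightarrow> sg z = SOne"
  unfolding is_one_def using eqv_sg by (force simp: sg_def)

definition stuck :: "cfg \<times> cfg \<Rightarrow> bool" where
  "stuck p \<longleftrightarrow> \<not> (\<exists>q. red p q)"

definition fails :: "cfg \<times> cfg \<Rightarrow> bool" where
  "fails p \<longleftrightarrow> (\<exists>q. red\<^sup>*\<^sup>* p q \<and> stuck q \<and> \<not> is_one (snd (fst q)))"

lemma compliant_fails: "compliant r s \<longleftrightarrow> \<not> fails (([], C r), ([], C s))"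
proof
  assume "compliant r s"
  then show "\<not> fails (([], C r), ([], C s))"
    unfolding compliant_def compliant_cfg_def fails_def stuck_def by (metis prod.collapse)
next
  assume "\<not> fails (([], C r), ([], C s))"
  then show "compliant r s"
    unfolding compliant_def compliant_cfg_def fails_def stuck_def by (metis snd_conv fst_conv)
qed

lemma fails_pre: "red\<^sup>*\<^sup>* p q \<Longrightarrow> fails q \<Longrightarrow> fails p"
  unfolding fails_def by (meson rtranclp_trans)

lemma fails_stuck: "stuck p \<Longrightarrow> \<not> is_one (snd (fst p)) \<Longrightarrow> fails p"
  unfolding fails_def by blast

lemma stuckI:
  assumes "h1 = [] \<or> h2 = []"
    and "\<And>l q. ltr (h1, X) l q \<Longrightarrow> l \<noteq> LTau"
    and "\<And>l q. ltr (h2, Y) l q \<Longrightarrow> l \<noteq> LTau"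
    and "\<And>l q q'. ltr (h1, X) l q \<Longrightarrow> ltr (h2, Y) (dual l) q' \<Longrightarrow> l = LTau \<or> l = LRb"
  shows "stuck ((h1, X), (h2, Y))"
  unfolding stuck_def
proof
  assume "\<exists>q. red ((h1, X), h2, Y) q"
  then obtain q where "red ((h1, X), h2, Y) q" by blast
  then show False
  proof (cases rule: red.cases)
    case ct
    then show False
    proof (cases rule: red_ct.cases)
      case comm then show False using assms(4) by blast
    next
      case tau_l then show False using assms(2) by blast
    next
      case tau_r then show False using assms(3) by blast
    qed
  next
    case rbk
    then show False using assms(1) ltr_rb_nonempty by auto
  qed
qed

fun lft :: "cst list \<Rightarrow> cfg \<Rightarrow> cfg" where
  "lft g (h, x) = (h @ g, x)"

lemma snd_lft[simp]: "snd (lft g c) = snd c"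
  by (cases c) simp

lemma ltr_lift: "ltr c l c' \<Longrightarrow> ltr (lft g c) l (lft g c')"
  by (induction rule: ltr.induct) (auto intro: ltr.intros)

lemma ltr_unlift: "ltr (lft g c) l q \<Longrightarrow> l \<noteq> LRb \<Longrightarrow> \<exists>q'. ltr c l q'"
proof -
  assume a: "ltr (lft g c) l q" "l \<noteq> LRb"
  obtain h x where c: "c = (h, x)" by (cases c)
  from a show ?thesis unfolding c
    by (cases rule: ltr.cases) (auto intro: ltr.intros)
qed

lemma dual_rb: "dual l = LRb \<longleftrightarrow> l = LRb"
  by (cases l) auto

lemma dual_tau: "dual l = LTau \<longleftrightarrow> l = LTau"
  by (cases l) auto

lemma red_ct_unlift: "red_ct (lft g1 c, lft g2 s) q \<Longrightarrow> \<exists>q'. red_ct (c, s) q'"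
proof -
  assume "red_ct (lft g1 c, lft g2 s) q"
  then consider (a) l c' s' where "ltr (lft g1 c) l c'" "ltr (lft g2 s) (dual l) s'" "l \<noteq> LTau" "l \<noteq> LRb"
    | (b) c' where "ltr (lft g1 c) LTau c'" | (c) s' where "ltr (lft g2 s) LTau s'"
    by (auto simp: red_ct.simps)
  then show ?thesis
  proof cases
    case a
    obtain c'' where "ltr c l c''" using ltr_unlift a by blast
    moreover obtain s'' where "ltr s (dual l) s''" using ltr_unlift[of g2 s "dual l"] a dual_rb by blast
    ultimately show ?thesis using a by (blast intro: red_ct.comm)
  next
    case b
    then show ?thesis using ltr_unlift[of g1 c LTau] by (blast intro: red_ct.tau_l)
  next
    case c
    then show ?thesis using ltr_unlift[of g2 s LTau] by (blast intro: red_ct.tau_r)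
  qed
qed

lemma red_ct_lift: "red_ct (c, s) (c', s') \<Longrightarrow> red_ct (lft g1 c, lft g2 s) (lft g1 c', lft g2 s')"
proof -
  assume "red_ct (c, s) (c', s')"
  then consider (a) l where "ltr c l c'" "ltr s (dual l) s'" "l \<noteq> LTau" "l \<noteq> LRb"
    | (b) "ltr c LTau c'" "s' = s" | (c) "ltr s LTau s'" "c' = c"
    by (auto simp: red_ct.simps)
  then show ?thesis
  proof cases
    case a then show ?thesis using red_ct.comm[OF ltr_lift[OF a(1)] ltr_lift[OF a(2)]] by simp
  next
    case b then show ?thesis using red_ct.tau_l[OF ltr_lift[OF b(1)]] by simp
  next
    case c then show ?thesis using red_ct.tau_r[OF ltr_lift[OF c(1)]] by simp
  qed
qed

lemma red_lift: "red (c, s) (c', s') \<Longrightarrow> red (lft g1 c, lft g2 s) (lft g1 c', lft g2 s')"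
proof -
  assume "red (c, s) (c', s')"
  then consider (a) "red_ct (c, s) (c', s')"
    | (b) "ltr c LRb c'" "ltr s LRb s'" "\<not> is_one (snd c)" "\<not> (\<exists>q. red_ct (c, s) q)"
    by (auto simp: red.simps)
  then show ?thesis
  proof cases
    case a then show ?thesis using red.ct red_ct_lift by blast
  next
    case b
    have "\<not> (\<exists>q. red_ct (lft g1 c, lft g2 s) q)" using b red_ct_unlift by blast
    then show ?thesis using red.rbk[OF ltr_lift[OF b(1)] ltr_lift[OF b(2)]] b(3) by simp
  qed
qed

definition lftp :: "cst list \<Rightarrow> cst list \<Rightarrow> cfg \<times> cfg \<Rightarrow> cfg \<times> cfg" where
  "lftp g1 g2 p = (lft g1 (fst p), lft g2 (snd p))"

lemma reds_lift: "red\<^sup>*\<^sup>* p q \<Longrightarrow> red\<^sup>*\<^sup>* (lftp g1 g2 p) (lftp g1 g2 q)"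
proof (induction rule: rtranclp_induct)
  case (step y z)
  have "red (lftp g1 g2 y) (lftp g1 g2 z)"
    using red_lift[of "fst y" "snd y" "fst z" "snd z" g1 g2] step(2) by (simp add: lftp_def)
  then show ?case using step(3) by simp
qed simp

lemma ltr_len: "ltr c l c' \<Longrightarrow> (l = LTau \<longrightarrow> fst c' = fst c) \<and>
   (l \<noteq> LTau \<and> l \<noteq> LRb \<longrightarrow> length (fst c') = Suc (length (fst c))) \<and>
   (l = LRb \<longrightarrow> length (fst c) = Suc (length (fst c')))"
  by (induction rule: ltr.induct) auto

definition lenok :: "cfg \<times> cfg \<Rightarrow> bool" where
  "lenok p \<longleftrightarrow> length (fst (fst p)) = length (fst (snd p))"

lemma red_lenok: "red (c, s) (c', s') \<Longrightarrow> lenok (c, s) \<Longrightarrow> lenok (c', s')"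
proof -
  assume r: "red (c, s) (c', s')" and l: "lenok (c, s)"
  from r consider (a) l where "ltr c l c'" "ltr s (dual l) s'" "l \<noteq> LTau" "l \<noteq> LRb"
    | (b) "ltr c LTau c'" "s' = s" | (c) "ltr s LTau s'" "c' = c"
    | (d) "ltr c LRb c'" "ltr s LRb s'"
    by (auto simp: red.simps red_ct.simps)
  then show ?thesis
  proof cases
    case a
    have "dual l \<noteq> LTau" "dual l \<noteq> LRb" using a dual_rb dual_tau by auto
    then show ?thesis using ltr_len[OF a(1)] ltr_len[OF a(2)] a l by (simp add: lenok_def)
  next
    case b then show ?thesis using ltr_len[OF b(1)] l by (simp add: lenok_def)
  next
    case c then show ?thesis using ltr_len[OF c(1)] l by (simp add: lenok_def)
  next
    case d then show ?thesis using ltr_len[OF d(1)] ltr_len[OF d(2)] l by (simp add: lenok_def)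
  qed
qed

lemma red_lenok': "red p q \<Longrightarrow> lenok p \<Longrightarrow> lenok q"
  using red_lenok[of "fst p" "snd p" "fst q" "snd q"] by simp

lemma reds_lenok: "red\<^sup>*\<^sup>* p q \<Longrightarrow> lenok p \<Longrightarrow> lenok q"
  by (induction rule: rtranclp_induct) (auto intro: red_lenok')

lemma fail_lift:
  assumes "fails (([], C r), ([], C s))"
  shows "red\<^sup>*\<^sup>* ((x1 # g1, C r), (x2 # g2, C s)) ((g1, x1), (g2, x2))"
proof -
  obtain q where q: "red\<^sup>*\<^sup>* (([], C r), ([], C s)) q" "stuck q" "\<not> is_one (snd (fst q))"
    using assms unfolding fails_def by blast
  obtain h1 X h2 Y where qq: "q = ((h1, X), (h2, Y))" by (metis prod.collapse)
  have "lenok q" using reds_lenok[OF q(1)] by (simp add: lenok_def)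
  then have len: "length h1 = length h2" using qq by (simp add: lenok_def)
  have h1: "h1 = []"
  proof (rule ccontr)
    assume "h1 \<noteq> []"
    then obtain z h1' w h2' where hz: "h1 = z # h1'" "h2 = w # h2'" using len
      by (cases h1; cases h2) auto
    have nct: "\<not> (\<exists>q'. red_ct ((h1, X), (h2, Y)) q')" using q(2) qq unfolding stuck_def by (blast intro: red.ct)
    have n1: "\<not> is_one (snd (h1, X))" using q(3) qq by simp
    have "red ((z # h1', X), (w # h2', Y)) ((h1', z), (h2', w))"
      using red.rbk[OF ltr.rb[of z h1' X] ltr.rb[of w h2' Y]] n1 nct hz by simp
    then have "red q ((h1', z), (h2', w))" using qq hz by simp
    then show False using q(2) unfolding stuck_def by blast
  qed
  then have h2: "h2 = []" using len by simp
  have r1: "red\<^sup>*\<^sup>* ((x1 # g1, C r), (x2 # g2, C s)) ((x1 # g1, X), (x2 # g2, Y))"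
    using reds_lift[OF q(1), of "x1 # g1" "x2 # g2"] qq h1 h2 by (simp add: lftp_def)
  have nct: "\<not> (\<exists>q'. red_ct ((x1 # g1, X), (x2 # g2, Y)) q')"
  proof
    assume "\<exists>q'. red_ct ((x1 # g1, X), (x2 # g2, Y)) q'"
    then obtain q' where "red_ct (lft (x1 # g1) ([], X), lft (x2 # g2) ([], Y)) q'" by auto
    then obtain q'' where "red_ct (([], X), ([], Y)) q''" using red_ct_unlift by blast
    then show False using q(2) qq h1 h2 unfolding stuck_def by (blast intro: red.ct)
  qed
  have n1: "\<not> is_one (snd (x1 # g1, X))" using q(3) qq by simp
  have "red ((x1 # g1, X), (x2 # g2, Y)) ((g1, x1), (g2, x2))"
    using red.rbk[OF ltr.rb[of x1 g1 X] ltr.rb[of x2 g2 Y] n1] nct by simp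
  then show ?thesis using r1 by simp
qed



definition K :: "bool \<Rightarrow> (nat \<times> ctr) fset \<Rightarrow> ctr" where
  "K p S = (if p then Inp S else ROut S)"

definition lb :: "bool \<Rightarrow> nat \<Rightarrow> lab" where
  "lb p a = (if p then LIn a else LOut a)"

definition push :: "bool \<Rightarrow> (nat \<times> ctr) fset \<Rightarrow> nat \<Rightarrow> ctr \<Rightarrow> cst" where
  "push p S a c = (if 2 \<le> fcard S then C (K p (S |-| {|(a, c)|})) else Circ)"

lemma dual_lb: "dual (lb p a) = lb (\<not> p) a"
  by (simp add: lb_def)

lemma lb_ne: "lb p a \<noteq> LTau" "lb p a \<noteq> LRb"
  by (auto simp: lb_def)

lemma step_sum:
  assumes "eqv x (K p S)" "choice_ok S" "(a, c) |\<in>| S"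
  shows "ltr (h, C x) (lb p a) (push p S a c # h, C c)"
proof (cases "2 \<le> fcard S")
  case True
  then show ?thesis using assms
    by (cases p) (auto simp: K_def lb_def push_def intro: ltr.inp_sum ltr.rout_sum)
next
  case False
  have "S \<noteq> {||}" using assms(2) by (simp add: choice_ok_def)
  then obtain q where q: "S = {|q|}" using fset_single[OF _ False] by blast
  then have "S = {|(a, c)|}" using assms(3) by simp
  then show ?thesis using assms False
    by (cases p) (auto simp: K_def lb_def push_def intro: ltr.inp_one ltr.out_one)
qed

lemma sg_K: "sg (K p S) = (if p then SIn (fst |`| S) else SR (fst |`| S))"
  by (simp add: K_def sg_def)

lemma okz_K: "okz (K p S)"
  by (simp add: okz_def K_def)

definition inl :: "cst \<Rightarrow> nat fset" where
  "inl X = (case X of Circ \<Rightarrow> {||} | C x \<Rightarrow> (case sg x of SIn N \<Rightarrow> N | _ \<Rightarrow> {||}))"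

definition outl :: "cst \<Rightarrow> nat fset" where
  "outl X = (case X of Circ \<Rightarrow> {||} | C x \<Rightarrow> (case sg x of SR N \<Rightarrow> N | _ \<Rightarrow> {||}))"

definition tauok :: "cst \<Rightarrow> bool" where
  "tauok X = (case X of Circ \<Rightarrow> True | C x \<Rightarrow> okz x \<and> (\<forall>N. sg x \<noteq> SU N))"

lemma ltr_cst:
  assumes "ltr (h, X) l q" "tauok X"
  shows "l \<noteq> LTau \<and> (\<forall>a. l = LIn a \<longrightarrow> a |\<in>| inl X) \<and> (\<forall>a. l = LOut a \<longrightarrow> a |\<in>| outl X)"
proof (cases X)
  case Circ then show ?thesis using ltr_Circ assms by blast
next
  case (C x)
  have "l \<noteq> LTau" using lab_tau[of h x q] assms C by (auto simp: tauok_def)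
  moreover have "\<forall>a. l = LIn a \<longrightarrow> a |\<in>| inl X" using assms C by (auto simp: inl_def dest!: lab_in)
  moreover have "\<forall>a. l = LOut a \<longrightarrow> a |\<in>| outl X" using assms C by (auto simp: outl_def dest!: lab_out)
  ultimately show ?thesis by blast
qed

lemma stuck2:
  assumes "h1 = [] \<or> h2 = []" "tauok X" "tauok Y"
    "inl X |\<inter>| outl Y = {||}" "outl X |\<inter>| inl Y = {||}"
  shows "stuck ((h1, X), (h2, Y))"
proof (rule stuckI[OF assms(1)])
  show "\<And>l q. ltr (h1, X) l q \<Longrightarrow> l \<noteq> LTau" using ltr_cst assms(2) by blast
  show "\<And>l q. ltr (h2, Y) l q \<Longrightarrow> l \<noteq> LTau" using ltr_cst assms(3) by blast
  fix l q q' assume a: "ltr (h1, X) l q" "ltr (h2, Y) (dual l) q'"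
  note A = ltr_cst[OF a(1) assms(2)] ltr_cst[OF a(2) assms(3)]
  show "l = LTau \<or> l = LRb"
  proof (cases l)
    case (LIn b) then show ?thesis using A assms(4) by (auto simp: fset_eq_iff)
  next
    case (LOut b) then show ?thesis using A assms(5) by (auto simp: fset_eq_iff)
  qed auto
qed

lemma notone_Circ: "\<not> is_one Circ"
  by (simp add: is_one_def)

lemma notone_C: "sg x \<noteq> SOne \<Longrightarrow> \<not> is_one (C x)"
  using is_one_sg by blast

lemma names_mem: "a |\<in>| fst |`| R \<Longrightarrow> \<exists>c. (a, c) |\<in>| R"
  by force

lemma choice_ok_minus: "choice_ok R \<Longrightarrow> 2 \<le> fcard R \<Longrightarrow> choice_ok (R |-| {|q|})"
proof -
  assume a: "choice_ok R" "2 \<le> fcard R"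
  have "fcard (R |-| {|q|}) \<noteq> 0"
  proof
    assume "fcard (R |-| {|q|}) = 0"
    then have "R |\<subseteq>| {|q|}" by (auto simp: fcard_0_eq)
    then have "fcard R \<le> 1" by (metis fcard_mono fcard_single)
    then show False using a by simp
  qed
  then have "R |-| {|q|} \<noteq> {||}" by auto
  then show ?thesis using a unfolding choice_ok_def by auto
qed

lemma fail_sum:
  assumes "choice_ok R" "choice_ok S" "eqv x (K p R)" "eqv y (K (\<not> p) S)" "okz x" "okz y"
    "\<forall>a rk sk. (a, rk) |\<in>| R \<longrightarrow> (a, sk) |\<in>| S \<longrightarrow> fails (([], C rk), ([], C sk))"
  shows "fails (([], C x), ([], C y))"
  using assms
proof (induction "fcard R" arbitrary: R S x y rule: less_induct)
  case less
  have sx: "sg x = sg (K p R)" using eqv_sg less.prems(3) .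
  have sy: "sg y = sg (K (\<not>p) S)" using eqv_sg less.prems(4) .
  show ?case
  proof (cases "\<exists>a rk sk. (a, rk) |\<in>| R \<and> (a, sk) |\<in>| S")
    case True
    then obtain a rk sk where br: "(a, rk) |\<in>| R" "(a, sk) |\<in>| S" by blast
    define P where "P = push p R a rk"
    define Q where "Q = push (\<not>p) S a sk"
    have s1: "ltr ([], C x) (lb p a) ([P], C rk)"
      using step_sum[OF less.prems(3) less.prems(1) br(1)] by (simp add: P_def)
    have s2: "ltr ([], C y) (dual (lb p a)) ([Q], C sk)"
      using step_sum[OF less.prems(4) less.prems(2) br(2)] by (simp add: dual_lb Q_def)
    have r1: "red (([], C x), ([], C y)) (([P], C rk), ([Q], C sk))"
      using red.ct[OF red_ct.comm[OF s1 s2 lb_ne]] .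
    have "fails (([], C rk), ([], C sk))" using less.prems(7) br by blast
    then have r2: "red\<^sup>*\<^sup>* (([P], C rk), ([Q], C sk)) (([], P), ([], Q))"
      using fail_lift[of rk sk P "[]" Q "[]"] by simp
    have f3: "fails (([], P), ([], Q))"
    proof (cases "2 \<le> fcard R \<and> 2 \<le> fcard S")
      case True
      let ?R' = "R |-| {|(a, rk)|}"
      let ?S' = "S |-| {|(a, sk)|}"
      have P: "P = C (K p ?R')" and Q: "Q = C (K (\<not>p) ?S')" using True by (auto simp: P_def Q_def push_def)
      have lt: "fcard ?R' < fcard R" using br(1) by (rule fcard_fminus1_less)
      have c1: "choice_ok ?R'" using choice_ok_minus less.prems(1) True by blast
      have c2: "choice_ok ?S'" using choice_ok_minus less.prems(2) True by blast
      have "fails (([], C (K p ?R')), ([], C (K (\<not>p) ?S')))"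
        using less.hyps[OF lt c1 c2 eqv_refl eqv_refl okz_K okz_K] less.prems(7) by auto
      then show ?thesis using P Q by simp
    next
      case False
      have tP: "tauok P" "\<not> is_one P"
        by (auto simp: P_def push_def tauok_def okz_K sg_K notone_Circ intro!: notone_C split: if_splits)
      have tQ: "tauok Q" by (auto simp: Q_def push_def tauok_def okz_K sg_K)
      have circ: "P = Circ \<or> Q = Circ" using False by (auto simp: P_def Q_def push_def)
      have "stuck (([], P), ([], Q))"
        using circ by (intro stuck2) (auto simp: tP tQ inl_def outl_def)
      then show ?thesis using tP(2) fails_stuck by auto
    qed
    show ?thesis using fails_pre[OF _ f3] r1 r2 by (meson converse_rtranclp_into_rtranclp)
  next
    case False
    have "stuck (([], C x), ([], C y))"
    proof (rule stuck2)
      show "tauok (C x)" using less.prems(5) sx by (auto simp: tauok_def sg_K)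
      show "tauok (C y)" using less.prems(6) sy by (auto simp: tauok_def sg_K)
      show "inl (C x) |\<inter>| outl (C y) = {||}"
        using False sx sy by (auto simp: inl_def outl_def sg_K dest!: names_mem)
      show "outl (C x) |\<inter>| inl (C y) = {||}"
        using False sx sy by (auto simp: inl_def outl_def sg_K dest!: names_mem)
    qed simp
    moreover have "\<not> is_one (C x)" using sx by (intro notone_C) (simp add: sg_K)
    ultimately show ?thesis using fails_stuck by auto
  qed
qed



inductive_cases wfInpE: "wf_at k (Inp S)"
inductive_cases wfROutE: "wf_at k (ROut S)"

lemma wfo_kid: "wfo (UOut S) \<Longrightarrow> (a, c) |\<in>| S \<Longrightarrow> \<exists>k. wf_at k (UOut S) \<and> wf_at k c"
proof -
  assume a: "wfo (UOut S)" "(a, c) |\<in>| S"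
  then obtain k where w: "wf_at k (UOut S)" unfolding wfo_def by blast
  have "wf_at k c" using w by (rule wfUOutE) (use a in auto)
  then show ?thesis using w by blast
qed

lemma choice_single: "choice_ok {|p|}"
  by (auto simp: choice_ok_def)

lemma eqv_UOut_ROut_single:
  assumes "wf_at k c"
  shows "eqv (UOut {|(a, c)|}) (ROut {|(a, c)|})"
proof -
  have "wf_at k (ROut {|(a, c)|})" "wf_at k (UOut {|(a, c)|})"
    using assms choice_single by (auto intro!: wf_at.intros)
  then have "eqv (ROut {|(a, c)|}) (UOut {|(a, c)|})"
    using conv1_eqv[OF conv1.unary] unfolding wfo_def by blast
  then show ?thesis by (rule eqv_sym)
qed

lemma sg_single: "sg (UOut {|(a, c)|}) = SR {|a|}"
  by (simp add: sg_def)

lemma okz_single: "okz (UOut {|p|})"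
  using choice_single by (simp add: okz_def)

lemma choice_uniq: "choice_ok S \<Longrightarrow> (a, c) |\<in>| S \<Longrightarrow> (a, d) |\<in>| S \<Longrightarrow> c = d"
  unfolding choice_ok_def by blast

lemma C1:
  assumes "compliant x y" "eqv x (K p R)" "eqv y (K (\<not>p) S)" "choice_ok R" "choice_ok S" "okz x" "okz y"
  shows "\<exists>a rk sk. (a, rk) |\<in>| R \<and> (a, sk) |\<in>| S \<and> compliant rk sk"
proof (rule ccontr)
  assume "\<not> ?thesis"
  then have "\<forall>a rk sk. (a, rk) |\<in>| R \<longrightarrow> (a, sk) |\<in>| S \<longrightarrow> fails (([], C rk), ([], C sk))"
    using compliant_fails by blast
  then have "fails (([], C x), ([], C y))" by (rule fail_sum[OF assms(4) assms(5) assms(2) assms(3) assms(6) assms(7)])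
  then show False using assms(1) compliant_fails by blast
qed

lemma C3:
  assumes "compliant x y" "eqv x (Inp R)" "eqv y (UOut S)" "2 \<le> fcard S" "choice_ok R" "wfo (UOut S)"
    "okz x" "(a, sa) |\<in>| S"
  shows "a |\<in>| fst |`| R \<and> (\<forall>ra. (a, ra) |\<in>| R \<longrightarrow> compliant ra sa)"
proof (rule ccontr)
  assume nc: "\<not> ?thesis"
  obtain k where "wf_at k sa" using wfo_kid[OF assms(6) assms(8)] by blast
  then have e1: "eqv (UOut {|(a, sa)|}) (K (\<not>True) {|(a, sa)|})"
    using eqv_UOut_ROut_single by (simp add: K_def)
  have e0: "eqv x (K True R)" using assms(2) by (simp add: K_def)
  have br: "\<forall>a' rk sk. (a', rk) |\<in>| R \<longrightarrow> (a', sk) |\<in>| {|(a, sa)|} \<longrightarrow> fails (([], C rk), ([], C sk))"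
  proof (intro allI impI)
    fix a' rk sk assume h: "(a', rk) |\<in>| R" "(a', sk) |\<in>| {|(a, sa)|}"
    then have aa: "a' = a" "sk = sa" by auto
    have hr: "(a, rk) |\<in>| R" using h(1) aa by simp
    then have "a |\<in>| fst |`| R" by (rule mem_names)
    then have "\<not> (\<forall>ra. (a, ra) |\<in>| R \<longrightarrow> compliant ra sa)" using nc by simp
    then obtain ra where ra: "(a, ra) |\<in>| R" "\<not> compliant ra sa" by blast
    have "rk = ra" using choice_uniq[OF assms(5) hr ra(1)] .
    then show "fails (([], C rk), ([], C sk))" using ra aa compliant_fails by simp
  qed
  have "fails (([], C x), ([], C (UOut {|(a, sa)|})))"
    using fail_sum[OF assms(5) choice_single e0 e1 assms(7) okz_single br] .
  moreover have "red (([], C x), ([], C y)) (([], C x), ([], C (UOut {|(a, sa)|})))"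
    using red.ct[OF red_ct.tau_r[OF ltr.uout_tau[OF assms(3) assms(8) assms(4)]]] .
  ultimately have "fails (([], C x), ([], C y))" using fails_pre by blast
  then show False using assms(1) compliant_fails by blast
qed

lemma C4:
  assumes "compliant x y" "eqv x (UOut R)" "eqv y (Inp S)" "2 \<le> fcard R" "choice_ok S" "wfo (UOut R)"
    "okz y" "(a, ra) |\<in>| R"
  shows "a |\<in>| fst |`| S \<and> (\<forall>sa. (a, sa) |\<in>| S \<longrightarrow> compliant ra sa)"
proof (rule ccontr)
  assume nc: "\<not> ?thesis"
  obtain k where "wf_at k ra" using wfo_kid[OF assms(6) assms(8)] by blast
  then have e1: "eqv (UOut {|(a, ra)|}) (K False {|(a, ra)|})"
    using eqv_UOut_ROut_single by (simp add: K_def)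
  have e0: "eqv y (K (\<not>False) S)" using assms(3) by (simp add: K_def)
  have br: "\<forall>a' rk sk. (a', rk) |\<in>| {|(a, ra)|} \<longrightarrow> (a', sk) |\<in>| S \<longrightarrow> fails (([], C rk), ([], C sk))"
  proof (intro allI impI)
    fix a' rk sk assume h: "(a', rk) |\<in>| {|(a, ra)|}" "(a', sk) |\<in>| S"
    then have aa: "a' = a" "rk = ra" by auto
    have hs: "(a, sk) |\<in>| S" using h(2) aa by simp
    then have "a |\<in>| fst |`| S" by (rule mem_names)
    then have "\<not> (\<forall>sa. (a, sa) |\<in>| S \<longrightarrow> compliant ra sa)" using nc by simp
    then obtain sa where sa: "(a, sa) |\<in>| S" "\<not> compliant ra sa" by blast
    have "sk = sa" using choice_uniq[OF assms(5) hs sa(1)] .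
    then show "fails (([], C rk), ([], C sk))" using sa aa compliant_fails by simp
  qed
  have "fails (([], C (UOut {|(a, ra)|})), ([], C y))"
    using fail_sum[OF choice_single assms(5) e1 e0 okz_single assms(7) br] .
  moreover have "red (([], C x), ([], C y)) (([], C (UOut {|(a, ra)|})), ([], C y))"
    using red.ct[OF red_ct.tau_l[OF ltr.uout_tau[OF assms(2) assms(8) assms(4)]]] .
  ultimately have "fails (([], C x), ([], C y))" using fails_pre by blast
  then show False using assms(1) compliant_fails by blast
qed



lemma tau_norm:
  assumes "wfo x" "eqv x x'" "hf x'"
  shows "\<exists>x''. (x'' = x \<or> ltr ([], C x) LTau ([], C x'')) \<and> okz x'' \<and>
     (x' = One \<longrightarrow> sg x'' = SOne) \<and>
     (\<forall>R. x' = Inp R \<longrightarrow> (\<exists>N. sg x'' = SIn N)) \<and>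
     (\<forall>R. x' = ROut R \<or> x' = UOut R \<longrightarrow> (\<exists>N. sg x'' = SR N))"
proof -
  have ox: "okz x" using assms(1) by (rule wfo_okz)
  have sx: "sg x = sg x'" using eqv_sg[OF assms(2)] .
  consider (one) "x' = One" | (inp) R where "x' = Inp R" | (rout) R where "x' = ROut R"
    | (uout) R where "x' = UOut R" "2 \<le> fcard R"
    using assms(3) unfolding hf_def by blast
  then show ?thesis
  proof cases
    case one then show ?thesis using ox sx by (intro exI[of _ x]) (simp add: sg_def)
  next
    case (inp R) then show ?thesis using ox sx by (intro exI[of _ x]) (simp add: sg_def)
  next
    case (rout R) then show ?thesis using ox sx by (intro exI[of _ x]) (simp add: sg_def)
  next
    case (uout R)
    then have "R \<noteq> {||}" by (auto simp: fcard_fempty)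
    then obtain a ra where ar: "(a, ra) |\<in>| R" by fastforce
    have "ltr ([], C x) LTau ([], C (UOut {|(a, ra)|}))"
      using ltr.uout_tau[OF _ ar uout(2)] assms(2) uout(1) by simp
    then show ?thesis using uout okz_single sg_single
      by (intro exI[of _ "UOut {|(a, ra)|}"]) simp
  qed
qed

lemma C5:
  assumes "compliant x y" "eqv x x'" "eqv y y'" "hf x'" "hf y'" "x' \<noteq> One" "wfo x" "wfo y"
  shows "(\<exists>R S. x' = Inp R \<and> (y' = ROut S \<or> (y' = UOut S \<and> 2 \<le> fcard S))) \<or>
         (\<exists>R S. (x' = ROut R \<or> (x' = UOut R \<and> 2 \<le> fcard R)) \<and> y' = Inp S)"
proof (rule ccontr)
  assume nv: "\<not> ?thesis"
  obtain x'' where x'': "x'' = x \<or> ltr ([], C x) LTau ([], C x'')" "okz x''"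
     "x' = One \<longrightarrow> sg x'' = SOne"
     "\<forall>R. x' = Inp R \<longrightarrow> (\<exists>N. sg x'' = SIn N)"
     "\<forall>R. x' = ROut R \<or> x' = UOut R \<longrightarrow> (\<exists>N. sg x'' = SR N)"
    using tau_norm[OF assms(7) assms(2) assms(4)] by blast
  obtain y'' where y'': "y'' = y \<or> ltr ([], C y) LTau ([], C y'')" "okz y''"
     "y' = One \<longrightarrow> sg y'' = SOne"
     "\<forall>R. y' = Inp R \<longrightarrow> (\<exists>N. sg y'' = SIn N)"
     "\<forall>R. y' = ROut R \<or> y' = UOut R \<longrightarrow> (\<exists>N. sg y'' = SR N)"
    using tau_norm[OF assms(8) assms(3) assms(5)] by blast
  have r1: "red\<^sup>*\<^sup>* (([], C x), ([], C y)) (([], C x''), ([], C y))"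
    using x''(1) by (auto intro: red.ct red_ct.tau_l)
  have r2: "red\<^sup>*\<^sup>* (([], C x''), ([], C y)) (([], C x''), ([], C y''))"
    using y''(1) by (auto intro: red.ct red_ct.tau_r)
  have cx: "(\<exists>N. sg x'' = SIn N \<and> (\<exists>R. x' = Inp R)) \<or>
            (\<exists>N. sg x'' = SR N \<and> (\<exists>R. x' = ROut R \<or> (x' = UOut R \<and> 2 \<le> fcard R)))"
    using assms(4,6) x'' unfolding hf_def by blast
  have cy: "sg y'' = SOne \<or> (\<exists>N. sg y'' = SIn N \<and> (\<exists>S. y' = Inp S)) \<or>
            (\<exists>N. sg y'' = SR N \<and> (\<exists>S. y' = ROut S \<or> (y' = UOut S \<and> 2 \<le> fcard S)))"
    using assms(5) y'' unfolding hf_def by blast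
  have disj: "inl (C x'') |\<inter>| outl (C y'') = {||} \<and> outl (C x'') |\<inter>| inl (C y'') = {||}"
    using cx cy nv by (auto simp: inl_def outl_def)
  have "stuck (([], C x''), ([], C y''))"
    using disj cx cy x''(2) y''(2) by (intro stuck2) (auto simp: tauok_def)
  moreover have "\<not> is_one (C x'')" using cx by (intro notone_C) auto
  ultimately have "fails (([], C x''), ([], C y''))" using fails_stuck by simp
  then have "fails (([], C x), ([], C y))" using r1 r2 fails_pre rtranclp_trans by metis
  then show False using assms(1) compliant_fails by blast
qed



lemma main:
  assumes RR: "\<forall>x\<in>Rr. clos Rr x \<and> wf_at 0 x" and RS: "\<forall>x\<in>Rs. clos Rs x \<and> wf_at 0 x"
    and fin: "finite Rr" "finite Rs"
  shows "\<Gamma> \<subseteq> Rr \<times> Rs \<Longrightarrow> r \<in> Rr \<Longrightarrow> s \<in> Rs \<Longrightarrow> compliant r s \<Longrightarrow> deriv \<Gamma> r s"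
proof (induction "card (Rr \<times> Rs - \<Gamma>)" arbitrary: \<Gamma> r s rule: less_induct)
  case less
  show ?case
  proof (cases "(r, s) \<in> \<Gamma>")
    case True then show ?thesis by (rule deriv.Hyp) simp_all
  next
    case False
    let ?G = "insert (r, s) \<Gamma>"
    have lt: "card (Rr \<times> Rs - ?G) < card (Rr \<times> Rs - \<Gamma>)"
      using False less.prems fin by (intro psubset_card_mono) auto
    have IH: "\<And>r0 s0. r0 \<in> Rr \<Longrightarrow> s0 \<in> Rs \<Longrightarrow> compliant r0 s0 \<Longrightarrow> deriv ?G r0 s0"
      using less.hyps[OF lt] less.prems by auto
    obtain r' where r': "eqv r r'" "wf_at 0 r'" "hf r'" "kids_in Rr r'"
      using hnf_exists[OF RR less.prems(2)] by blast
    obtain s' where s': "eqv s s'" "wf_at 0 s'" "hf s'" "kids_in Rs s'"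
      using hnf_exists[OF RS less.prems(3)] by blast
    have wr: "wfo r" "wfo s" using RR RS less.prems unfolding wfo_def by blast+
    have ok: "okz r" "okz s" using wr wfo_okz by blast+
    show ?thesis
    proof (cases "r' = One")
      case True then show ?thesis using r'(1) by (intro deriv.Ax) simp
    next
      case False
      from C5[OF less.prems(4) r'(1) s'(1) r'(3) s'(3) False wr]
      consider (a) R S where "r' = Inp R" "s' = ROut S"
        | (b) R S where "r' = Inp R" "s' = UOut S" "2 \<le> fcard S"
        | (c) R S where "r' = ROut R" "s' = Inp S"
        | (d) R S where "r' = UOut R" "2 \<le> fcard R" "s' = Inp S"
        by blast
      then show ?thesis
      proof cases
        case a
        have cR: "choice_ok R" using r'(2) a by (auto elim: wfInpE)
        have cS: "choice_ok S" using s'(2) a by (auto elim: wfROutE)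
        have e1: "eqv r (K True R)" "eqv s (K (\<not>True) S)" using r'(1) s'(1) a by (simp_all add: K_def)
        obtain b rk sk where br: "(b, rk) |\<in>| R" "(b, sk) |\<in>| S" "compliant rk sk"
          using C1[OF less.prems(4) e1 cR cS ok] by blast
        have "rk \<in> Rr" "sk \<in> Rs" using br r'(4) s'(4) a by (auto simp: kids_in_def)
        then have "deriv ?G rk sk" using IH br by blast
        then show ?thesis using deriv.PlusPlus_io[OF _ _ br(1) br(2)] r'(1) s'(1) a by simp
      next
        case c
        have cR: "choice_ok R" using r'(2) c by (auto elim: wfROutE)
        have cS: "choice_ok S" using s'(2) c by (auto elim: wfInpE)
        have e1: "eqv r (K False R)" "eqv s (K (\<not>False) S)" using r'(1) s'(1) c by (simp_all add: K_def)
        obtain b rk sk where br: "(b, rk) |\<in>| R" "(b, sk) |\<in>| S" "compliant rk sk"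
          using C1[OF less.prems(4) e1 cR cS ok] by blast
        have "rk \<in> Rr" "sk \<in> Rs" using br r'(4) s'(4) c by (auto simp: kids_in_def)
        then have "deriv ?G rk sk" using IH br by blast
        then show ?thesis using deriv.PlusPlus_oi[OF _ _ br(1) br(2)] r'(1) s'(1) c by simp
      next
        case b
        have "wf_at 0 (Inp R)" using r'(2) b by simp
        then have cR: "choice_ok R" by (rule wfInpE)
        have wS: "wfo (UOut S)" unfolding wfo_def using s'(2) b by (intro exI[of _ 0]) simp
        have e1: "eqv r (Inp R)" "eqv s (UOut S)" using r'(1) s'(1) b by simp_all
        note c3 = C3[OF less.prems(4) e1 b(3) cR wS ok(1)]
        have sub: "fst |`| S |\<subseteq>| fst |`| R"
        proof
          fix a assume "a |\<in>| fst |`| S"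
          then have "\<exists>sa. (a, sa) |\<in>| S" by (rule names_mem)
          then obtain sa where m: "(a, sa) |\<in>| S" ..
          show "a |\<in>| fst |`| R" using c3[OF m] by (rule conjunct1)
        qed
        have all: "\<forall>a ra sa. (a, ra) |\<in>| R \<longrightarrow> (a, sa) |\<in>| S \<longrightarrow> deriv ?G ra sa"
        proof (intro allI impI)
          fix a ra sa assume h: "(a, ra) |\<in>| R" "(a, sa) |\<in>| S"
          have "compliant ra sa" using conjunct2[OF c3[OF h(2)]] h(1) by simp
          moreover have "ra \<in> Rr" using h(1) r'(4) b by (simp add: kids_in_def)
          moreover have "sa \<in> Rs" using h(2) s'(4) b by (simp add: kids_in_def)
          ultimately show "deriv ?G ra sa" using IH by blast
        qed
        show ?thesis by (rule deriv.PlusOplus[OF e1 sub all])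
      next
        case d
        have "wf_at 0 (Inp S)" using s'(2) d by simp
        then have cS: "choice_ok S" by (rule wfInpE)
        have wR: "wfo (UOut R)" unfolding wfo_def using r'(2) d by (intro exI[of _ 0]) simp
        have e1: "eqv r (UOut R)" "eqv s (Inp S)" using r'(1) s'(1) d by simp_all
        note c4 = C4[OF less.prems(4) e1 d(2) cS wR ok(2)]
        have sub: "fst |`| R |\<subseteq>| fst |`| S"
        proof
          fix a assume "a |\<in>| fst |`| R"
          then have "\<exists>ra. (a, ra) |\<in>| R" by (rule names_mem)
          then obtain ra where m: "(a, ra) |\<in>| R" ..
          show "a |\<in>| fst |`| S" using c4[OF m] by (rule conjunct1)
        qed
        have all: "\<forall>a ra sa. (a, ra) |\<in>| R \<longrightarrow> (a, sa) |\<in>| S \<longrightarrow> deriv ?G ra sa"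
        proof (intro allI impI)
          fix a ra sa assume h: "(a, ra) |\<in>| R" "(a, sa) |\<in>| S"
          have "compliant ra sa" using conjunct2[OF c4[OF h(1)]] h(2) by simp
          moreover have "ra \<in> Rr" using h(1) r'(4) d by (simp add: kids_in_def)
          moreover have "sa \<in> Rs" using h(2) s'(4) d by (simp add: kids_in_def)
          ultimately show "deriv ?G ra sa" using IH by blast
        qed
        show ?thesis by (rule deriv.OplusPlus[OF e1 sub all])
      qed
    qed
  qed
qed

theorem theorem3:
  assumes "rcontract \<rho>" and "rcontract \<sigma>" and "compliant \<rho> \<sigma>"
  shows "deriv {} \<rho> \<sigma>"
proof -
  have w: "wf_at 0 \<rho>" "wf_at 0 \<sigma>" using assms unfolding rcontract_def by auto
  note p1 = RS_props[OF w(1)] and p2 = RS_props[OF w(2)]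
  show ?thesis
    by (rule main[of "RS \<rho>" "RS \<sigma>"]) (use p1 p2 assms(3) in auto)
qed


end
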